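(* Let $0<\alpha\le \frac12$. Then the Ces\`aro operator $\mathcal{C}$ is bounded on the Korenblum space $H^\infty_\alpha$, and its operator norm satisfies $$\|\mathcal{C}\|_{H^\infty_\alpha\to H^\infty_\alpha}=\frac{1}{\alpha}.$$
   Context: $\mathbb{D}$ is the open unit disc and $H(\mathbb{D})$ the space of analytic functions on $\mathbb{D}$. For $f(z)=\sum_{k\ge0}a_kz^k\in H(\mathbb{D})$ the Ces\`aro operator is $\mathcal{C}(f)(z)=\sum_{n\ge0}\Big(\frac{1}{n+1}\sum_{k=0}^n a_k\Big)z^n=\int_0^1\frac{f(tz)}{1-tz}\,dt$. For $0<\alpha<1$, the Korenblum space $H^\infty_\alpha$ consists of $f\in H(\mathbb{D})$ with $\|f\|_{H^\infty_\alpha}=\sup_{z\in\mathbb{D}}(1-|z|^2)^\alpha|f(z)|<\infty$. Operator norms are $\|\mathcal{C}\|_{X\to Y}=\sup\{\|\mathcal{C}f\|_Y:\|f\|_X\le 1\}$. *)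

theory Defs
  imports "HOL-Analysis.Analysis"
begin

definition korenblum_weighted :: "real \<Rightarrow> (complex \<Rightarrow> complex) \<Rightarrow> complex \<Rightarrow> real" where
  "korenblum_weighted \<alpha> f z = (1 - (cmod z)^2) powr \<alpha> * cmod (f z)"

definition in_korenblum :: "real \<Rightarrow> (complex \<Rightarrow> complex) \<Rightarrow> bool" where
  "in_korenblum \<alpha> f \<longleftrightarrow> f holomorphic_on ball 0 1 \<and>
     bdd_above (korenblum_weighted \<alpha> f ` ball 0 1)"

definition korenblum_norm :: "real \<Rightarrow> (complex \<Rightarrow> complex) \<Rightarrow> real" where
  "korenblum_norm \<alpha> f = (SUP z\<in>ball 0 1. korenblum_weighted \<alpha> f z)"

definition cesaro :: "(complex \<Rightarrow> complex) \<Rightarrow> complex \<Rightarrow> complex" where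
  "cesaro f z = integral {0..1} (\<lambda>t::real. f (of_real t * z) / (1 - of_real t * z))"

definition cesaro_norm_korenblum :: "real \<Rightarrow> real" where
  "cesaro_norm_korenblum \<alpha> =
     Sup {korenblum_norm \<alpha> (cesaro f) | f. in_korenblum \<alpha> f \<and> korenblum_norm \<alpha> f \<le> 1}"

end

theory Submission
  imports Defs "HOL-Complex_Analysis.Complex_Analysis" "HOL-Real_Asymp.Real_Asymp"
begin


lemma tz_in_ball: "z \<in> ball (0::complex) 1 \<Longrightarrow> t \<in> {0..1::real} \<Longrightarrow> of_real t * z \<in> ball 0 1"
proof -
  assume z: "z \<in> ball (0::complex) 1" and t: "t \<in> {0..1::real}"
  have "cmod (of_real t * z) = t * cmod z" using t by (simp add: norm_mult)
  also have "\<dots> \<le> cmod z" using t by (simp add: mult_left_le_one_le)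
  finally show ?thesis using z by simp
qed

lemma denom_nz: "z \<in> ball (0::complex) 1 \<Longrightarrow> t \<in> {0..1::real} \<Longrightarrow> 1 - of_real t * z \<noteq> 0"
  using tz_in_ball[of z t] by (metis dist_0_norm mem_ball norm_one order_less_irrefl right_minus_eq)

lemma quot_aux: "(d::complex) \<noteq> 0 \<Longrightarrow> (a * t * d - b * (- t)) / d^2 = t * a / d + b * t / d^2"
  by (simp add: field_simps power2_eq_square)

lemma cesaro_holo:
  assumes hf: "f holomorphic_on ball 0 1"
  shows "cesaro f holomorphic_on ball 0 1"
proof -
  have cb: "cbox (0::real) 1 = {0..1}" by simp
  have df: "(f has_field_derivative deriv f w) (at w)" if "w \<in> ball 0 1" for w
    using hf that by (meson holomorphic_derivI open_ball)
  have cf: "continuous_on (ball 0 1) f" using hf holomorphic_on_imp_continuous_on by blast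
  have cdf: "continuous_on (ball 0 1) (deriv f)"
    using hf holomorphic_deriv holomorphic_on_imp_continuous_on open_ball by blast
  have "(\<lambda>x. integral (cbox 0 1) (\<lambda>t::real. f (of_real t * x) / (1 - of_real t * x))) holomorphic_on ball 0 1"
  proof (rule leibniz_rule_holomorphic[where fx="\<lambda>x t. of_real t * deriv f (of_real t * x) / (1 - of_real t * x)
        + f (of_real t * x) * of_real t / (1 - of_real t * x)^2"])
    fix x t assume x: "x \<in> ball (0::complex) 1" and t: "t \<in> cbox (0::real) 1"
    then have tb: "of_real t * x \<in> ball 0 1" and nz: "1 - of_real t * x \<noteq> 0"
      using tz_in_ball denom_nz by auto
    have d1: "((\<lambda>x. f (of_real t * x)) has_field_derivative deriv f (of_real t * x) * of_real t) (at x)"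
    proof -
      have g: "((\<lambda>x. of_real t * x) has_field_derivative of_real t) (at x)"
        by (auto intro!: derivative_eq_intros)
      show ?thesis using DERIV_chain2[where g="\<lambda>x. of_real t * x", OF df[OF tb] g] by simp
    qed
    have "((\<lambda>x. f (of_real t * x) / (1 - of_real t * x)) has_field_derivative
        of_real t * deriv f (of_real t * x) / (1 - of_real t * x)
        + f (of_real t * x) * of_real t / (1 - of_real t * x)^2) (at x)"
    proof -
      have g2: "((\<lambda>x. 1 - of_real t * x) has_field_derivative - of_real t) (at x)"
        by (auto intro!: derivative_eq_intros)
      have e: "(deriv f (of_real t * x) * of_real t * (1 - of_real t * x) - f (of_real t * x) * (- of_real t)) / (1 - of_real t * x)^2
          = of_real t * deriv f (of_real t * x) / (1 - of_real t * x)
        + f (of_real t * x) * of_real t / (1 - of_real t * x)^2"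
        using quot_aux[OF nz] by simp
      show ?thesis using DERIV_divide[OF d1 g2 nz] unfolding e[symmetric] by (simp add: power2_eq_square)
    qed
    then show "((\<lambda>x. f (of_real t * x) / (1 - of_real t * x)) has_field_derivative
        of_real t * deriv f (of_real t * x) / (1 - of_real t * x)
        + f (of_real t * x) * of_real t / (1 - of_real t * x)^2) (at x within ball 0 1)"
      using has_field_derivative_at_within by blast
  next
    fix x assume x: "x \<in> ball (0::complex) 1"
    have "continuous_on {0..1::real} (\<lambda>t. f (of_real t * x) / (1 - of_real t * x))"
      apply (intro continuous_intros continuous_on_compose2[OF cf])
      using x tz_in_ball denom_nz by auto
    then show "(\<lambda>t::real. f (of_real t * x) / (1 - of_real t * x)) integrable_on cbox 0 1"
      using integrable_continuous_real by auto
  next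
    show "continuous_on (ball 0 1 \<times> cbox 0 1) (\<lambda>(x, t::real). of_real t * deriv f (of_real t * x) / (1 - of_real t * x)
        + f (of_real t * x) * of_real t / (1 - of_real t * x)^2)"
      unfolding case_prod_unfold
      apply (intro continuous_intros continuous_on_compose2[OF cf] continuous_on_compose2[OF cdf])
      using tz_in_ball denom_nz by (auto simp: mem_Times_iff)
  qed auto
  then show ?thesis unfolding cesaro_def[abs_def] cb .
qed



lemma q_pos:
  fixes r t :: real
  assumes "0 \<le> r" "r < 1" "0 \<le> t" "t \<le> 1"
  shows "1 - t^2*r^2 > 0"
proof -
  have "t^2*r^2 \<le> 1 * r^2" using assms by (intro mult_right_mono) (auto simp: power_le_one)
  also have "\<dots> < 1" using assms by (simp add: power_less_one_iff abs_less_iff) 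
  finally show ?thesis by simp
qed

lemma Phi_deriv:
  fixes r a t :: real
  assumes "0 \<le> r" "r < 1" "0 \<le> t" "t \<le> 1" "0 < a"
  shows "((\<lambda>t. t * (1 - t^2 * r^2) powr (-a) / a) has_real_derivative
     ((1 - t^2*r^2) powr (-a) + 2 * a * t^2 * r^2 * (1 - t^2*r^2) powr (-a-1)) / a) (at t)"
proof -
  have q: "1 - t^2*r^2 > 0" using q_pos assms by blast
  have d1: "((\<lambda>t. 1 - t^2 * r^2) has_real_derivative - (2 * t * r^2)) (at t)"
    by (auto intro!: derivative_eq_intros)
  have d2: "((\<lambda>t. (1 - t^2 * r^2) powr (-a)) has_real_derivative (-a) * (1 - t^2*r^2) powr (-a - of_nat 1) * (- (2 * t * r^2))) (at t)"
    by (rule DERIV_fun_powr[OF d1 q])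
  show ?thesis
    by (rule DERIV_cong[OF DERIV_cdivide[OF DERIV_mult[OF DERIV_ident d2], of a]]) (simp add: algebra_simps power2_eq_square)
qed

lemma key_pointwise:
  fixes r a t :: real
  assumes "0 \<le> r" "r < 1" "0 \<le> t" "t \<le> 1" "0 < a" "a \<le> 1/2"
  shows "(1 - t^2*r^2) powr (-a) / (1 - t*r) \<le>
     ((1 - t^2*r^2) powr (-a) + 2 * a * t^2 * r^2 * (1 - t^2*r^2) powr (-a-1)) / a"
proof -
  define s where "s = t*r"
  have s0: "0 \<le> s" and s1: "s < 1" unfolding s_def using assms
    using mult_left_le_one_le[of r t] by auto
  have qe: "1 - t^2*r^2 = (1-s)*(1+s)" unfolding s_def by (simp add: algebra_simps power2_eq_square)
  define q where "q = 1 - t^2*r^2"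
  have q: "q > 0" unfolding q_def using q_pos assms by blast
  define P where "P = q powr (-a-1)"
  have P: "P > 0" unfolding P_def using q by simp
  have qa: "q powr (-a) = q * P" unfolding P_def using q powr_add[of q 1 "-a-1"] by simp
  have poly0: "q + 2 * a * (s * s) - a*(1+s) = (1-s)*((1 - 2 * a) * s + 1 - a)" unfolding q_def qe by (simp add: algebra_simps)
  have h1: "(1 - 2 * a) * s \<ge> 0" using s0 assms by simp
  have h2: "(1 - 2 * a) * s + 1 - a \<ge> 0" using h1 assms by linarith
  have poly1: "(1-s)*((1 - 2 * a) * s + 1 - a) \<ge> 0" using s1 h2 by simp
  have poly: "(1+s) * a \<le> q + 2 * a * (s * s)" using poly0 poly1 by (simp add: algebra_simps)
  have "q powr (-a) / (1 - s) = (1+s) * P" unfolding qa using qe s1 unfolding q_def by (simp add: field_simps)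
  also have "\<dots> \<le> (q + 2 * a * (s * s)) * P / a" 
  proof -
    have "(1+s) * a * P \<le> (q + 2 * a * (s * s)) * P" using mult_right_mono[OF poly] P by simp
    then show ?thesis using assms by (simp add: pos_le_divide_eq mult.commute mult.left_commute)
  qed
  also have "\<dots> = (q powr (-a) + 2 * a * t^2 * r^2 * q powr (-a-1)) / a"
    unfolding qa P_def s_def by (simp add: algebra_simps power2_eq_square)
  finally show ?thesis unfolding s_def q_def .
qed

lemma key_integral:
  fixes r a :: real
  assumes "0 \<le> r" "r < 1" "0 < a"
  shows "((\<lambda>t. ((1 - t^2*r^2) powr (-a) + 2 * a * t^2 * r^2 * (1 - t^2*r^2) powr (-a-1)) / a)
     has_integral (1 - r^2) powr (-a) / a) {0..1}"
proof -
  have "((\<lambda>t. ((1 - t^2*r^2) powr (-a) + 2 * a * t^2 * r^2 * (1 - t^2*r^2) powr (-a-1)) / a)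
     has_integral (1 * (1 - 1^2 * r^2) powr (-a) / a - 0 * (1 - 0^2 * r^2) powr (-a) / a)) {0..1}"
    apply (rule fundamental_theorem_of_calculus)
    using assms by (auto intro!: has_field_derivative_at_within[OF Phi_deriv] simp: has_real_derivative_iff_has_vector_derivative[symmetric])
  then show ?thesis by simp
qed


lemma N_nonneg: assumes "in_korenblum a f" shows "korenblum_norm a f \<ge> 0"
proof -
  have "korenblum_weighted a f 0 \<le> korenblum_norm a f"
    unfolding korenblum_norm_def using assms unfolding in_korenblum_def by (intro cSUP_upper) auto
  moreover have "korenblum_weighted a f 0 \<ge> 0" unfolding korenblum_weighted_def by simp
  ultimately show ?thesis by linarith
qed

lemma f_bound:
  assumes "in_korenblum a f" "w \<in> ball 0 1"
  shows "cmod (f w) \<le> korenblum_norm a f * (1 - (cmod w)^2) powr (-a)"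
proof -
  have le: "korenblum_weighted a f w \<le> korenblum_norm a f"
    unfolding korenblum_norm_def using assms unfolding in_korenblum_def by (intro cSUP_upper) auto
  have x: "1 - (cmod w)^2 > 0" using assms(2) by (simp add: power_less_one_iff abs_less_iff)
  define x where "x = 1 - (cmod w)^2"
  have xx: "x powr a * x powr (-a) = 1" using x unfolding x_def by (simp add: powr_add[symmetric])
  have "cmod (f w) = (x powr a * cmod (f w)) * x powr (-a)" using xx by (simp add: algebra_simps)
  also have "\<dots> \<le> korenblum_norm a f * x powr (-a)"
    using le unfolding korenblum_weighted_def x_def by (intro mult_right_mono) auto
  finally show ?thesis unfolding x_def .
qed

lemma cesaro_bound:
  assumes a0: "0 < a" and a1: "a \<le> 1/2" and kf: "in_korenblum a f" and z: "z \<in> ball 0 1"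
  shows "korenblum_weighted a (cesaro f) z \<le> korenblum_norm a f / a"
proof -
  define N where "N = korenblum_norm a f"
  have N0: "N \<ge> 0" unfolding N_def using N_nonneg[OF kf] .
  define r where "r = cmod z"
  have r0: "0 \<le> r" and r1: "r < 1" using z unfolding r_def by auto
  have hf: "f holomorphic_on ball 0 1" using kf unfolding in_korenblum_def by blast
  have cf: "continuous_on (ball 0 1) f" using hf holomorphic_on_imp_continuous_on by blast
  define g where "g = (\<lambda>t::real. f (of_real t * z) / (1 - of_real t * z))"
  define D where "D = (\<lambda>t::real. ((1 - t^2*r^2) powr (-a) + 2 * a * t^2 * r^2 * (1 - t^2*r^2) powr (-a-1)) / a)"
  have gint: "g integrable_on {0..1}"
  proof -
    have "continuous_on {0..1::real} g"
      unfolding g_def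
      apply (intro continuous_intros continuous_on_compose2[OF cf])
      using z tz_in_ball denom_nz by auto
    then show ?thesis using integrable_continuous_real by auto
  qed
  have Dint: "((\<lambda>t. N * D t) has_integral N * ((1 - r^2) powr (-a) / a)) {0..1}"
    unfolding D_def by (intro has_integral_mult_right key_integral r0 r1 a0)
  have gb: "cmod (g t) \<le> N * D t" if t: "t \<in> {0..1}" for t
  proof -
    have t0: "0 \<le> t" and t1: "t \<le> 1" using t by auto
    have n1: "cmod (of_real t * z) = t * r" unfolding r_def using t0 by (simp add: norm_mult)
    have "t * r \<le> r" using mult_left_le_one_le[of r t] r0 t0 t1 by simp
    then have tr1: "1 - t * r > 0" using r1 by simp
    have den: "cmod (1 - of_real t * z) \<ge> 1 - t * r"
      using norm_triangle_ineq2[of 1 "of_real t * z"] n1 by simp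
    have fb: "cmod (f (of_real t * z)) \<le> N * (1 - t^2 * r^2) powr (-a)"
      using f_bound[OF kf tz_in_ball[OF z t]] n1 unfolding N_def by (simp add: power_mult_distrib)
    have "cmod (g t) = cmod (f (of_real t * z)) / cmod (1 - of_real t * z)"
      unfolding g_def by (simp add: norm_divide)
    also have "\<dots> \<le> N * (1 - t^2 * r^2) powr (-a) / (1 - t * r)"
      by (intro frac_le fb den tr1 mult_nonneg_nonneg N0) auto
    also have "\<dots> = N * ((1 - t^2 * r^2) powr (-a) / (1 - t * r))" by simp
    also have "\<dots> \<le> N * D t" unfolding D_def
      by (intro mult_left_mono key_pointwise N0 r0 r1 t0 t1 a0 a1)
    finally show ?thesis .
  qed
  have "cmod (cesaro f z) = cmod (integral {0..1} g)" unfolding cesaro_def g_def by simp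
  also have "\<dots> \<le> integral {0..1} (\<lambda>t. N * D t)"
    by (intro integral_norm_bound_integral gint gb) (use Dint in blast)+
  also have "\<dots> = N * ((1 - r^2) powr (-a) / a)" using integral_unique[OF Dint] by simp
  finally have cb: "cmod (cesaro f z) \<le> N * ((1 - r^2) powr (-a) / a)" .
  have x: "1 - r^2 > 0" using r0 r1 by (simp add: power_less_one_iff)
  have xx: "(1 - r^2) powr a * (1 - r^2) powr (-a) = 1" using x by (simp add: powr_add[symmetric])
  have "korenblum_weighted a (cesaro f) z = (1 - r^2) powr a * cmod (cesaro f z)"
    unfolding korenblum_weighted_def r_def ..
  also have "\<dots> \<le> (1 - r^2) powr a * (N * ((1 - r^2) powr (-a) / a))"
    by (intro mult_left_mono cb) auto
  also have "\<dots> = N / a" using xx by (simp add: field_simps)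
  finally show ?thesis unfolding N_def .
qed



definition f0 :: "real \<Rightarrow> complex \<Rightarrow> complex" where
  "f0 a z = of_real (2 powr (-a)) * (1 - z) powr (of_real (-a))"

lemma one_minus_notin: "z \<in> ball (0::complex) 1 \<Longrightarrow> 1 - z \<notin> \<real>\<^sub>\<le>\<^sub>0"
proof -
  assume z: "z \<in> ball (0::complex) 1"
  have "Re z \<le> cmod z" using abs_Re_le_cmod[of z] by linarith
  then have "Re (1 - z) > 0" using z by simp
  then show ?thesis by (auto simp: complex_nonpos_Reals_iff)
qed

lemma f0_holo: "f0 a holomorphic_on ball 0 1"
  unfolding f0_def[abs_def]
  by (intro holomorphic_intros holomorphic_on_powr) (auto simp: one_minus_notin)

lemma f0_weighted:
  assumes a: "0 < a" and z: "z \<in> ball 0 1"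
  shows "korenblum_weighted a (f0 a) z \<le> 1"
proof -
  define u where "u = cmod (1 - z)"
  have z1: "cmod z < 1" using z by simp
  have u1: "1 - cmod z \<le> u" unfolding u_def using norm_triangle_ineq2[of 1 z] by simp
  have u0: "u > 0" using u1 z1 by linarith
  have nf: "cmod (f0 a z) = 2 powr (-a) * u powr (-a)"
    unfolding f0_def u_def by (simp add: norm_mult norm_powr_real_powr')
  have "1 - (cmod z)^2 = (1 - cmod z) * (1 + cmod z)" by (simp add: algebra_simps power2_eq_square)
  also have "\<dots> \<le> u * 2" using u1 z1 by (intro mult_mono) auto
  finally have le: "1 - (cmod z)^2 \<le> 2 * u" by simp
  have nn: "0 \<le> 1 - (cmod z)^2" using z1 by (simp add: abs_square_le_1 power_le_one)
  have "korenblum_weighted a (f0 a) z = (1 - (cmod z)^2) powr a * (2 powr (-a) * u powr (-a))"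
    unfolding korenblum_weighted_def nf ..
  also have "\<dots> \<le> (2 * u) powr a * (2 powr (-a) * u powr (-a))"
    by (intro mult_right_mono powr_mono2 le nn) (use a in auto)
  also have "\<dots> = (2 powr a * 2 powr (-a)) * (u powr a * u powr (-a))"
    using u0 by (simp add: powr_mult)
  also have "\<dots> = 1" using u0 by (simp add: powr_add[symmetric])
  finally show ?thesis .
qed

lemma f0_kor: assumes "0 < a" shows "in_korenblum a (f0 a)" "korenblum_norm a (f0 a) \<le> 1"
proof -
  show "in_korenblum a (f0 a)" unfolding in_korenblum_def
    using f0_weighted[OF assms] by (intro conjI f0_holo bdd_aboveI2[where M=1]) auto
  show "korenblum_norm a (f0 a) \<le> 1" unfolding korenblum_norm_def
    using f0_weighted[OF assms] by (intro cSUP_least) auto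
qed

lemma cesaro_f0:
  assumes a: "0 < a" and r0: "0 < r" and r1: "r < 1"
  shows "cesaro (f0 a) (of_real r) = of_real (2 powr (-a) * ((1 - r) powr (-a) - 1) / (a * r))"
proof -
  define h where "h = (\<lambda>t. 2 powr (-a) * (1 - t * r) powr (-a-1))"
  have pos: "1 - t * r > 0" if "t \<in> {0..1}" for t
  proof -
    have "t * r \<le> r" using mult_left_le_one_le[of r t] r0 that by simp
    then show ?thesis using r1 by simp
  qed
  have eq: "f0 a (of_real t * of_real r) / (1 - of_real t * of_real r) = of_real (h t)" if t: "t \<in> {0..1}" for t
  proof -
    have p: "1 - t * r > 0" using pos[OF t] .
    have "f0 a (of_real t * of_real r) / (1 - of_real t * of_real r)
        = of_real (2 powr (-a) * (1 - t * r) powr (-a) / (1 - t * r))"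
      unfolding f0_def using p by (simp add: powr_of_real[symmetric])
    also have "(2 powr (-a) * (1 - t * r) powr (-a) / (1 - t * r)) = h t"
      using p unfolding h_def by (simp add: powr_diff)
    finally show ?thesis .
  qed
  have der: "((\<lambda>t. 2 powr (-a) * (1 - t * r) powr (-a) / (a * r)) has_real_derivative h t) (at t within {0..1})"
    if t: "t \<in> {0..1}" for t
  proof -
    have d1: "((\<lambda>t. 1 - t * r) has_real_derivative - r) (at t)"
      by (auto intro!: derivative_eq_intros)
    note d2 = DERIV_fun_powr[where r="-a", OF d1 pos[OF t]]
    have "((\<lambda>t. 2 powr (-a) * (1 - t * r) powr (-a) / (a * r)) has_real_derivative h t) (at t)"
      by (rule DERIV_cong[OF DERIV_cdivide[OF DERIV_cmult[OF d2, of "2 powr (-a)"], of "a * r"]])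
         (use a r0 in \<open>simp add: h_def field_simps\<close>)
    then show ?thesis using has_field_derivative_at_within by blast
  qed
  have "(h has_integral (2 powr (-a) * (1 - 1 * r) powr (-a) / (a * r) - 2 powr (-a) * (1 - 0 * r) powr (-a) / (a * r))) {0..1}"
    by (rule fundamental_theorem_of_calculus)
       (auto intro!: der simp: has_real_derivative_iff_has_vector_derivative[symmetric])
  then have hi: "(h has_integral (2 powr (-a) * ((1 - r) powr (-a) - 1) / (a * r))) {0..1}"
    by (simp add: diff_divide_distrib right_diff_distrib)
  have "((\<lambda>t. f0 a (of_real t * of_real r) / (1 - of_real t * of_real r)) has_integral
      of_real (2 powr (-a) * ((1 - r) powr (-a) - 1) / (a * r))) {0..1}"
    by (rule iffD2[OF has_integral_cong[OF eq] has_integral_of_real[OF hi]])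
  then show ?thesis unfolding cesaro_def by (rule integral_unique)
qed



lemma G_rewrite:
  assumes a: "0 < a" and r0: "0 < r" and r1: "r < (1::real)"
  shows "(1 - r^2) powr a * (2 powr (-a) * ((1 - r) powr (-a) - 1) / (a * r))
       = 2 powr (-a) * ((1 + r) powr a - (1 - r^2) powr a) / (a * r)"
proof -
  have "(1 - r^2) powr a * (1 - r) powr (-a) = ((1 - r) * (1 + r)) powr a * (1 - r) powr (-a)"
    by (simp add: algebra_simps power2_eq_square)
  also have "\<dots> = (1 + r) powr a * ((1 - r) powr a * (1 - r) powr (-a))"
    using r0 r1 by (simp add: powr_mult)
  also have "\<dots> = (1 + r) powr a" using r1 by (simp add: powr_add[symmetric])
  finally have e: "(1 - r^2) powr a * (1 - r) powr (-a) = (1 + r) powr a" .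
  show ?thesis using e by (simp add: field_simps)
qed

lemma G_limit:
  assumes a: "0 < a"
  shows "(\<lambda>n. 2 powr (-a) * ((1 + (1 - 1 / (real n + 2))) powr a - (1 - (1 - 1 / (real n + 2))^2) powr a)
            / (a * (1 - 1 / (real n + 2)))) \<longlonglongrightarrow> 1 / a"
proof -
  have l1: "(\<lambda>n. 1 - 1 / (real n + 2)) \<longlonglongrightarrow> 1" by real_asymp
  have l2: "(\<lambda>n. (1 + (1 - 1 / (real n + 2))) powr a) \<longlonglongrightarrow> (1 + 1) powr a"
    by (intro tendsto_intros l1) auto
  have l3: "(\<lambda>n. (1 - (1 - 1 / (real n + 2))^2) powr a) \<longlonglongrightarrow> 0"
  proof (rule tendsto_zero_powrI[OF _ tendsto_const _ a])
    show "(\<lambda>n. 1 - (1 - 1 / (real n + 2))^2) \<longlonglongrightarrow> 0"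
      using tendsto_diff[OF tendsto_const tendsto_power[OF l1, of 2], of 1] by simp
    show "\<forall>\<^sub>F n in sequentially. 0 \<le> 1 - (1 - 1 / (real n + 2))^2"
    proof (rule always_eventually, rule allI)
      fix n :: nat
      have "0 \<le> 1 - 1 / (real n + 2)" "1 - 1 / (real n + 2) \<le> 1" by (auto simp: field_simps)
      then have "(1 - 1 / (real n + 2))^2 \<le> 1" by (simp add: power_le_one)
      then show "0 \<le> 1 - (1 - 1 / (real n + 2))^2" by simp
    qed
  qed
  have "(\<lambda>n. 2 powr (-a) * ((1 + (1 - 1 / (real n + 2))) powr a - (1 - (1 - 1 / (real n + 2))^2) powr a)
            / (a * (1 - 1 / (real n + 2)))) \<longlonglongrightarrow> 2 powr (-a) * ((1 + 1) powr a - 0) / (a * 1)"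
    by (intro tendsto_intros l1 l2 l3) (use a in auto)
  also have "2 powr (-a) * ((1 + 1) powr a - 0) / (a * 1) = 1 / a"
    by (simp add: powr_add[symmetric])
  finally show ?thesis .
qed



lemma cesaro_kor:
  assumes a0: "0 < a" and a1: "a \<le> 1/2" and kf: "in_korenblum a f"
  shows "in_korenblum a (cesaro f)" "korenblum_norm a (cesaro f) \<le> korenblum_norm a f / a"
proof -
  have hf: "f holomorphic_on ball 0 1" using kf unfolding in_korenblum_def by blast
  show "in_korenblum a (cesaro f)" unfolding in_korenblum_def
    using cesaro_bound[OF a0 a1 kf] by (intro conjI cesaro_holo hf bdd_aboveI2) auto
  show "korenblum_norm a (cesaro f) \<le> korenblum_norm a f / a" unfolding korenblum_norm_def[of a "cesaro f"]
    using cesaro_bound[OF a0 a1 kf] by (intro cSUP_least) auto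
qed

theorem theorem3p1:
  fixes \<alpha> :: real
  assumes "0 < \<alpha>" and "\<alpha> \<le> 1/2"
  shows "(\<forall>f. in_korenblum \<alpha> f \<longrightarrow> in_korenblum \<alpha> (cesaro f))
       \<and> bdd_above {korenblum_norm \<alpha> (cesaro f) | f. in_korenblum \<alpha> f \<and> korenblum_norm \<alpha> f \<le> 1}
       \<and> cesaro_norm_korenblum \<alpha> = 1 / \<alpha>"
proof -
  note a0 = assms(1) and a1 = assms(2)
  define S where "S = {korenblum_norm \<alpha> (cesaro f) | f. in_korenblum \<alpha> f \<and> korenblum_norm \<alpha> f \<le> 1}"
  have P1: "\<forall>f. in_korenblum \<alpha> f \<longrightarrow> in_korenblum \<alpha> (cesaro f)" using cesaro_kor[OF a0 a1] by blast
  have Sle: "x \<le> 1 / \<alpha>" if xS: "x \<in> S" for x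
  proof -
    obtain f where f: "in_korenblum \<alpha> f" "korenblum_norm \<alpha> f \<le> 1" "x = korenblum_norm \<alpha> (cesaro f)"
      using xS unfolding S_def by blast
    have "x \<le> korenblum_norm \<alpha> f / \<alpha>" using cesaro_kor(2)[OF a0 a1 f(1)] f(3) by simp
    also have "\<dots> \<le> 1 / \<alpha>" using f(2) a0 by (simp add: divide_right_mono)
    finally show ?thesis .
  qed
  have bdd: "bdd_above S" using Sle by (auto simp: bdd_above_def)
  have z: "in_korenblum \<alpha> (\<lambda>_. 0)" "korenblum_norm \<alpha> (\<lambda>_. 0) \<le> 1"
    by (auto simp: in_korenblum_def korenblum_norm_def korenblum_weighted_def)
  have ne: "S \<noteq> {}" using z unfolding S_def by blast
  have k0: "in_korenblum \<alpha> (f0 \<alpha>)" "korenblum_norm \<alpha> (f0 \<alpha>) \<le> 1" using f0_kor[OF a0] by auto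
  have inS: "korenblum_norm \<alpha> (cesaro (f0 \<alpha>)) \<in> S" using k0 unfolding S_def by blast
  have kc: "in_korenblum \<alpha> (cesaro (f0 \<alpha>))" using P1 k0 by blast
  define rr where "rr = (\<lambda>n::nat. 1 - 1 / (real n + 2))"
  have rr0: "0 < rr n" and rr1: "rr n < 1" for n unfolding rr_def by (auto simp: field_simps)
  have low: "2 powr (-\<alpha>) * ((1 + rr n) powr \<alpha> - (1 - (rr n)^2) powr \<alpha>) / (\<alpha> * rr n)
       \<le> korenblum_norm \<alpha> (cesaro (f0 \<alpha>))" for n
  proof -
    define V where "V = 2 powr (-\<alpha>) * ((1 - rr n) powr (-\<alpha>) - 1) / (\<alpha> * rr n)"
    have inb: "complex_of_real (rr n) \<in> ball 0 1" using rr0[of n] rr1[of n] by simp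
    have "2 powr (-\<alpha>) * ((1 + rr n) powr \<alpha> - (1 - (rr n)^2) powr \<alpha>) / (\<alpha> * rr n)
        = (1 - (rr n)^2) powr \<alpha> * V"
      unfolding V_def by (rule G_rewrite[OF a0 rr0[of n] rr1[of n], symmetric])
    also have "\<dots> \<le> (1 - (rr n)^2) powr \<alpha> * cmod (complex_of_real V)"
      by (intro mult_left_mono) auto
    also have "\<dots> = korenblum_weighted \<alpha> (cesaro (f0 \<alpha>)) (of_real (rr n))"
      unfolding korenblum_weighted_def cesaro_f0[OF a0 rr0 rr1] V_def using rr0[of n] by simp
    also have "\<dots> \<le> korenblum_norm \<alpha> (cesaro (f0 \<alpha>))"
      unfolding korenblum_norm_def using kc inb unfolding in_korenblum_def by (intro cSUP_upper) auto
    finally show ?thesis .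
  qed
  have ge: "1 / \<alpha> \<le> korenblum_norm \<alpha> (cesaro (f0 \<alpha>))"
    by (rule LIMSEQ_le_const2[OF G_limit[OF a0]]) (use low in \<open>auto simp: rr_def\<close>)
  have "Sup S = 1 / \<alpha>"
  proof (rule antisym)
    show "Sup S \<le> 1 / \<alpha>" using ne Sle by (intro cSup_least) auto
    show "1 / \<alpha> \<le> Sup S" using cSup_upper2[OF inS ge bdd] .
  qed
  then show ?thesis using P1 bdd unfolding S_def cesaro_norm_korenblum_def by blast
qed


end
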